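(* Let $G$ be a proper interval graph with a proper vertex ordering $<$ and let $e,e'\in E(G)$. Then $\{e,e'\}$ is a uniquely restricted matching in $G$ if and only if $l(e),l(e')$ are distinct and nonadjacent or $r(e),r(e')$ are distinct and nonadjacent.
   Context: Graphs are finite, simple, undirected. A proper interval graph is a graph with an interval representation (closed real intervals, adjacency iff intersection for distinct vertices) in which no interval strictly contains another. An ordering $<$ of $V(G)$ is a proper vertex ordering if for all $u<v<w$, $uw\in E(G)$ implies $uv,vw\in E(G)$. For an edge $e=uv$, $l(e)=\min_<\{u,v\}$ and $r(e)=\max_<\{u,v\}$. A matching is a set of pairwise vertex-disjoint edges; it is uniquely restricted if no other matching of $G$ matches exactly the same vertex set. *)

theory Defs
  imports Complex_Main
begin

definition simple_graph :: "'a set \<Rightarrow> 'a set set \<Rightarrow> bool" where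
  "simple_graph V E \<longleftrightarrow> finite V \<and>
     (\<forall>e\<in>E. \<exists>u v. e = {u, v} \<and> u \<in> V \<and> v \<in> V \<and> u \<noteq> v)"

definition proper_interval_graph :: "'a set \<Rightarrow> 'a set set \<Rightarrow> bool" where
  "proper_interval_graph V E \<longleftrightarrow> simple_graph V E \<and>
     (\<exists>a b :: 'a \<Rightarrow> real.
        (\<forall>v\<in>V. a v \<le> b v) \<and>
        (\<forall>u\<in>V. \<forall>v\<in>V. u \<noteq> v \<longrightarrow> ({u, v} \<in> E \<longleftrightarrow> {a u..b u} \<inter> {a v..b v} \<noteq> {})) \<and>
        (\<forall>u\<in>V. \<forall>v\<in>V. \<not> ({a u..b u} \<subset> {a v..b v})))"

definition proper_vertex_ordering :: "'a set \<Rightarrow> 'a set set \<Rightarrow> 'a rel \<Rightarrow> bool" where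
  "proper_vertex_ordering V E r \<longleftrightarrow> r \<subseteq> V \<times> V \<and> strict_linear_order_on V r \<and>
     (\<forall>u\<in>V. \<forall>v\<in>V. \<forall>w\<in>V. (u, v) \<in> r \<and> (v, w) \<in> r \<and> {u, w} \<in> E \<longrightarrow>
        {u, v} \<in> E \<and> {v, w} \<in> E)"

definition lend :: "'a rel \<Rightarrow> 'a set \<Rightarrow> 'a" where
  "lend r e = (THE x. x \<in> e \<and> (\<forall>y\<in>e. y \<noteq> x \<longrightarrow> (x, y) \<in> r))"

definition rend :: "'a rel \<Rightarrow> 'a set \<Rightarrow> 'a" where
  "rend r e = (THE x. x \<in> e \<and> (\<forall>y\<in>e. y \<noteq> x \<longrightarrow> (y, x) \<in> r))"

definition matching :: "'a set set \<Rightarrow> 'a set set \<Rightarrow> bool" where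
  "matching E M \<longleftrightarrow> M \<subseteq> E \<and> (\<forall>e\<in>M. \<forall>f\<in>M. e \<noteq> f \<longrightarrow> e \<inter> f = {})"

definition uniquely_restricted_matching :: "'a set set \<Rightarrow> 'a set set \<Rightarrow> bool" where
  "uniquely_restricted_matching E M \<longleftrightarrow> matching E M \<and>
     (\<forall>M'. matching E M' \<and> \<Union>M' = \<Union>M \<longrightarrow> M' = M)"

end

theory Submission
  imports Defs
begin

lemma ur4:
  assumes sg: "\<forall>f\<in>E. \<exists>u v. f={u,v} \<and> u\<noteq>v"
    and dist: "a\<noteq>b" "a\<noteq>c" "a\<noteq>d" "b\<noteq>c" "b\<noteq>d" "c\<noteq>d"
    and e1: "{a,b}\<in>E" and e2: "{c,d}\<in>E"
  shows "uniquely_restricted_matching E {{a,b},{c,d}} \<longleftrightarrow>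
     \<not>({a,c}\<in>E \<and> {b,d}\<in>E) \<and> \<not>({a,d}\<in>E \<and> {b,c}\<in>E)"
proof
  assume U: "uniquely_restricted_matching E {{a,b},{c,d}}"
  have UA: "\<And>M'. matching E M' \<Longrightarrow> \<Union>M' = \<Union>{{a,b},{c,d}} \<Longrightarrow> M' = {{a,b},{c,d}}"
    using U unfolding uniquely_restricted_matching_def by (elim conjE) simp
  show "\<not>({a,c}\<in>E \<and> {b,d}\<in>E) \<and> \<not>({a,d}\<in>E \<and> {b,c}\<in>E)"
  proof (intro conjI notI)
    assume h: "{a,c}\<in>E \<and> {b,d}\<in>E"
    have "matching E {{a,c},{b,d}}" using h dist unfolding matching_def by auto
    moreover have "\<Union>{{a,c},{b,d}} = \<Union>{{a,b},{c,d}}" by auto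
    ultimately have "{{a,c},{b,d}} = {{a,b},{c,d}}" by (rule UA)
    then have "{a,c} \<in> {{a,b},{c,d}}" by (metis insertI1)
    then show False using dist by (auto simp: doubleton_eq_iff)
  next
    assume h: "{a,d}\<in>E \<and> {b,c}\<in>E"
    have "matching E {{a,d},{b,c}}" using h dist unfolding matching_def by auto
    moreover have "\<Union>{{a,d},{b,c}} = \<Union>{{a,b},{c,d}}" by auto
    ultimately have "{{a,d},{b,c}} = {{a,b},{c,d}}" by (rule UA)
    then have "{a,d} \<in> {{a,b},{c,d}}" by (metis insertI1)
    then show False using dist by (auto simp: doubleton_eq_iff)
  qed
next
  assume N: "\<not>({a,c}\<in>E \<and> {b,d}\<in>E) \<and> \<not>({a,d}\<in>E \<and> {b,c}\<in>E)"
  have M: "matching E {{a,b},{c,d}}" using e1 e2 dist unfolding matching_def by auto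
  show "uniquely_restricted_matching E {{a,b},{c,d}}"
    unfolding uniquely_restricted_matching_def
  proof (intro conjI M allI impI)
    fix M' assume H: "matching E M' \<and> \<Union>M' = \<Union>{{a,b},{c,d}}"
    have sub: "M' \<subseteq> E" and dj: "\<And>f g. f\<in>M' \<Longrightarrow> g\<in>M' \<Longrightarrow> f\<noteq>g \<Longrightarrow> f\<inter>g={}"
      using H unfolding matching_def by auto
    have U: "\<Union>M' = {a,b,c,d}" using H by auto
    have two: "\<And>f. f\<in>M' \<Longrightarrow> \<exists>u v. f={u,v} \<and> u\<noteq>v" using sub sg by blast
    have cov: "\<And>x. x\<in>{a,b,c,d} \<Longrightarrow> \<exists>f\<in>M'. x\<in>f" using U by blast
    have insub: "\<And>f. f\<in>M' \<Longrightarrow> f \<subseteq> {a,b,c,d}" using U by blast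
    have partner: "\<And>x. x\<in>{a,b,c,d} \<Longrightarrow> \<exists>y. {x,y}\<in>M' \<and> y\<noteq>x \<and> y\<in>{a,b,c,d}"
    proof -
      fix x assume x: "x\<in>{a,b,c,d}"
      then obtain f where f: "f\<in>M'" "x\<in>f" using cov by blast
      then obtain u v where uv: "f={u,v}" "u\<noteq>v" using two by blast
      show "\<exists>y. {x,y}\<in>M' \<and> y\<noteq>x \<and> y\<in>{a,b,c,d}"
      proof (cases "x=u")
        case True then show ?thesis using f uv insub[OF f(1)] by (intro exI[of _ v]) auto
      next
        case False then have "x=v" using f uv by auto
        then show ?thesis using f uv insub[OF f(1)] by (intro exI[of _ u]) (auto simp: insert_commute)
      qed
    qed
    have sgE: "\<And>f. f\<in>M' \<Longrightarrow> f\<in>E" using sub by blast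
    obtain y where y: "{a,y}\<in>M'" "y\<noteq>a" "y\<in>{a,b,c,d}" using partner by blast
    obtain z where z: "{b,z}\<in>M'" "z\<noteq>b" "z\<in>{a,b,c,d}" using partner by blast
    obtain w where w: "{c,w}\<in>M'" "w\<noteq>c" "w\<in>{a,b,c,d}" using partner by blast
    have yb: "y = b"
    proof (rule ccontr)
      assume "y\<noteq>b"
      then have ne: "{a,y}\<noteq>{b,z}" using dist y by (auto simp: doubleton_eq_iff)
      have "{a,y}\<inter>{b,z}={}" using dj[OF y(1) z(1) ne] .
      then have "z\<noteq>a" "z\<noteq>y" by auto
      have yc: "y=c \<or> y=d" using y \<open>y\<noteq>b\<close> by auto
      have zz: "z\<in>{c,d}" using z \<open>z\<noteq>a\<close> by auto
      show False
      proof (cases "y=c")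
        case True
        then have "z=d" using zz \<open>z\<noteq>y\<close> by auto
        then show False using N sgE[OF y(1)] sgE[OF z(1)] True by simp
      next
        case False
        then have "y=d" "z=c" using yc zz \<open>z\<noteq>y\<close> by auto
        then show False using N sgE[OF y(1)] sgE[OF z(1)] by (simp add: insert_commute)
      qed
    qed
    have wd: "w = d"
    proof -
      have ne: "{a,b}\<noteq>{c,w}" using dist by (auto simp: doubleton_eq_iff)
      have "{a,b}\<inter>{c,w}={}" using dj[OF _ w(1) ne] y(1) yb by simp
      then show ?thesis using w by auto
    qed
    have ab: "{a,b}\<in>M'" using y yb by simp
    have cd: "{c,d}\<in>M'" using w wd by simp
    show "M' = {{a,b},{c,d}}"
    proof
      show "{{a,b},{c,d}} \<subseteq> M'" using ab cd by simp
    next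
      show "M' \<subseteq> {{a,b},{c,d}}"
      proof
        fix h assume h: "h\<in>M'"
        obtain u v where uv: "h={u,v}" "u\<noteq>v" using two[OF h] by blast
        have "u \<in> {a,b,c,d}" using insub[OF h] uv by auto
        then have "h\<inter>{a,b}\<noteq>{} \<or> h\<inter>{c,d}\<noteq>{}" using uv by auto
        then show "h \<in> {{a,b},{c,d}}" using dj[OF h ab] dj[OF h cd] by auto
      qed
    qed
  qed
qed


lemma prophelp:
  assumes "AD \<Longrightarrow> BD" "U \<longleftrightarrow> \<not>(AC \<and> BD) \<and> \<not>(AD \<and> BC)" "AD \<Longrightarrow> AC" "x\<noteq>y" "z\<noteq>w"
  shows "U \<longleftrightarrow> (x\<noteq>y \<and> \<not>AC) \<or> (z\<noteq>w \<and> \<not>BD)"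
  using assms by blast

lemma core':
  assumes sg: "\<forall>f\<in>E. \<exists>u v. f={u,v} \<and> u\<noteq>v"
    and tr: "\<And>x y z. (x,y)\<in>r \<Longrightarrow> (y,z)\<in>r \<Longrightarrow> (x,z)\<in>r"
    and irr: "\<And>x. (x,x)\<notin>r"
    and tot: "\<And>x y. x\<in>V \<Longrightarrow> y\<in>V \<Longrightarrow> x\<noteq>y \<Longrightarrow> (x,y)\<in>r \<or> (y,x)\<in>r"
    and pv: "\<And>u v w. u\<in>V \<Longrightarrow> v\<in>V \<Longrightarrow> w\<in>V \<Longrightarrow> (u,v)\<in>r \<Longrightarrow> (v,w)\<in>r \<Longrightarrow> {u,w}\<in>E \<Longrightarrow> {u,v}\<in>E \<and> {v,w}\<in>E"
    and V: "a\<in>V" "b\<in>V" "c\<in>V" "d\<in>V"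
    and ab: "(a,b)\<in>r" and cd: "(c,d)\<in>r" and e1: "{a,b}\<in>E" and e2: "{c,d}\<in>E"
    and ne: "{a,b}\<noteq>{c,d}" and ac: "a=c \<or> (a,c)\<in>r"
  shows "uniquely_restricted_matching E {{a,b},{c,d}} \<longleftrightarrow> (a\<noteq>c \<and> {a,c}\<notin>E) \<or> (b\<noteq>d \<and> {b,d}\<notin>E)"
proof -
  have neq: "\<And>x y. (x,y)\<in>r \<Longrightarrow> x\<noteq>y" using irr by blast
  have nm: "\<not> uniquely_restricted_matching E {{a,b},{c,d}}" if "{a,b}\<inter>{c,d}\<noteq>{}"
  proof
    assume "uniquely_restricted_matching E {{a,b},{c,d}}"
    then have "matching E {{a,b},{c,d}}" unfolding uniquely_restricted_matching_def by (elim conjE)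
    then have "\<forall>x\<in>{{a,b},{c,d}}. \<forall>y\<in>{{a,b},{c,d}}. x\<noteq>y \<longrightarrow> x\<inter>y={}"
      unfolding matching_def by (elim conjE)
    then have "{a,b}\<inter>{c,d}={}" using ne by (meson insertI1 insertI2)
    then show False using that by (rule notE[rotated])
  qed
  show ?thesis
  proof (cases "a=c")
    case True
    then have bd: "b\<noteq>d" using ne by auto
    have "{b,d}\<in>E"
    proof (cases "(b,d)\<in>r")
      case True then show ?thesis using pv[OF V(1,2,4) ab True] e2 \<open>a=c\<close> by simp
    next
      case False then have db: "(d,b)\<in>r" using tot[OF V(2,4) bd] by blast
      have ad: "(a,d)\<in>r" using cd \<open>a=c\<close> by simp
      show ?thesis using pv[OF V(1,4,2) ad db e1] by (simp add: insert_commute)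
    qed
    moreover have "\<not> uniquely_restricted_matching E {{a,b},{c,d}}" by (rule nm) (simp add: True)
    ultimately show ?thesis using True by simp
  next
    case False
    then have acr: "(a,c)\<in>r" using ac by blast
    have aE: "{a,c}\<in>E" if "(c,b)\<in>r" using pv[OF V(1,3,2) acr that e1] by simp
    show ?thesis
    proof (cases "b=c")
      case True
      have "\<not> uniquely_restricted_matching E {{a,b},{c,d}}" by (rule nm) (simp add: True)
      then show ?thesis using e1 e2 True by simp
    next
      case bc: False
      show ?thesis
      proof (cases "b=d")
        case True
        have "\<not> uniquely_restricted_matching E {{a,b},{c,d}}" by (rule nm) (simp add: True)
        moreover have "{a,c}\<in>E" using aE cd True by simp
        ultimately show ?thesis using True by simp
      next
        case bd: False
        have dist: "a\<noteq>b" "a\<noteq>c" "a\<noteq>d" "b\<noteq>c" "b\<noteq>d" "c\<noteq>d"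
          using neq[OF ab] neq[OF acr] neq[OF tr[OF acr cd]] bc bd neq[OF cd] by auto
        have U: "uniquely_restricted_matching E {{a,b},{c,d}} \<longleftrightarrow>
           \<not>({a,c}\<in>E \<and> {b,d}\<in>E) \<and> \<not>({a,d}\<in>E \<and> {b,c}\<in>E)"
          by (rule ur4[OF sg dist e1 e2])
        have adr: "(a,d)\<in>r" using tr[OF acr cd] .
        have ad1: "{a,c}\<in>E" if "{a,d}\<in>E" using pv[OF V(1,3,4) acr cd that] by simp
        show ?thesis
        proof (cases "(b,c)\<in>r")
          case True
          have "{b,d}\<in>E" if "{a,d}\<in>E" using pv[OF V(1,2,4) ab tr[OF True cd] that] by simp
          then show ?thesis using U ad1 dist(2,5) by (rule prophelp)
        next
          case False
          then have cb: "(c,b)\<in>r" using tot[OF V(2,3) bc] by blast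
          show ?thesis
          proof (cases "(b,d)\<in>r")
            case True
            have "{b,d}\<in>E" if "{a,d}\<in>E" using pv[OF V(1,2,4) ab True that] by simp
            then show ?thesis using U ad1 dist(2,5) by (rule prophelp)
          next
            case False
            then have db: "(d,b)\<in>r" using tot[OF V(2,4) bd] by blast
            have "{a,c}\<in>E" using aE cb by blast
            moreover have "{d,b}\<in>E" using pv[OF V(1,4,2) adr db e1] by simp
            ultimately show ?thesis using U dist(2,5) by (simp add: insert_commute)
          qed
        qed
      qed
    qed
  qed
qed

lemma core:
  assumes sg: "\<forall>f\<in>E. \<exists>u v. f={u,v} \<and> u\<noteq>v"
    and tr: "\<And>x y z. (x,y)\<in>r \<Longrightarrow> (y,z)\<in>r \<Longrightarrow> (x,z)\<in>r"
    and irr: "\<And>x. (x,x)\<notin>r"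
    and tot: "\<And>x y. x\<in>V \<Longrightarrow> y\<in>V \<Longrightarrow> x\<noteq>y \<Longrightarrow> (x,y)\<in>r \<or> (y,x)\<in>r"
    and pv: "\<And>u v w. u\<in>V \<Longrightarrow> v\<in>V \<Longrightarrow> w\<in>V \<Longrightarrow> (u,v)\<in>r \<Longrightarrow> (v,w)\<in>r \<Longrightarrow> {u,w}\<in>E \<Longrightarrow> {u,v}\<in>E \<and> {v,w}\<in>E"
    and V: "a\<in>V" "b\<in>V" "c\<in>V" "d\<in>V"
    and ab: "(a,b)\<in>r" and cd: "(c,d)\<in>r" and e1: "{a,b}\<in>E" and e2: "{c,d}\<in>E"
    and ne: "{a,b}\<noteq>{c,d}"
  shows "uniquely_restricted_matching E {{a,b},{c,d}} \<longleftrightarrow> (a\<noteq>c \<and> {a,c}\<notin>E) \<or> (b\<noteq>d \<and> {b,d}\<notin>E)"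
proof (cases "a=c \<or> (a,c)\<in>r")
  case True show ?thesis
    by (rule core'[of E r V a b c d], rule sg, erule (1) tr, rule irr, (rule tot; assumption),
        (rule pv; assumption), (fact V ab cd e1 e2 ne True)+)
next
  case False
  then have "(c,a)\<in>r" using tot[OF V(1,3)] by blast
  then have ca: "c=a \<or> (c,a)\<in>r" by blast
  have ne': "{c,d}\<noteq>{a,b}" using ne by (rule not_sym)
  have "uniquely_restricted_matching E {{c,d},{a,b}} \<longleftrightarrow> (c\<noteq>a \<and> {c,a}\<notin>E) \<or> (d\<noteq>b \<and> {d,b}\<notin>E)"
    by (rule core'[of E r V c d a b], rule sg, erule (1) tr, rule irr, (rule tot; assumption),
        (rule pv; assumption), (fact V ab cd e1 e2 ne' ca)+)
  then show ?thesis by (simp add: insert_commute eq_commute)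
qed

lemma lr:
  assumes irr: "\<And>x. (x,x)\<notin>r" and tr: "\<And>x y z. (x,y)\<in>r \<Longrightarrow> (y,z)\<in>r \<Longrightarrow> (x,z)\<in>r"
    and ab: "(a,b)\<in>r"
  shows "lend r {a,b} = a" "rend r {a,b} = b"
proof -
  have nba: "(b,a)\<notin>r" using irr tr ab by blast
  show "lend r {a,b} = a" unfolding lend_def
    by (rule the_equality) (use ab nba in auto)
  show "rend r {a,b} = b" unfolding rend_def
    by (rule the_equality) (use ab nba in auto)
qed

theorem lemma3:
  fixes V :: "'a set" and E :: "'a set set" and r :: "'a rel" and e e' :: "'a set"
  assumes "proper_interval_graph V E"
    and "proper_vertex_ordering V E r"
    and "e \<in> E" and "e' \<in> E" and "e \<noteq> e'"
  shows "uniquely_restricted_matching E {e, e'} \<longleftrightarrow>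
         (lend r e \<noteq> lend r e' \<and> {lend r e, lend r e'} \<notin> E) \<or>
         (rend r e \<noteq> rend r e' \<and> {rend r e, rend r e'} \<notin> E)"
proof -
  have sgr: "simple_graph V E" using assms(1) unfolding proper_interval_graph_def by blast
  have sgV: "\<forall>f\<in>E. \<exists>u v. f={u,v} \<and> u\<in>V \<and> v\<in>V \<and> u\<noteq>v" using sgr unfolding simple_graph_def by blast
  have sg: "\<forall>f\<in>E. \<exists>u v. f={u,v} \<and> u\<noteq>v" using sgV by blast
  have slo: "strict_linear_order_on V r" using assms(2) unfolding proper_vertex_ordering_def by blast
  have tr: "\<And>x y z. (x,y)\<in>r \<Longrightarrow> (y,z)\<in>r \<Longrightarrow> (x,z)\<in>r"
    using slo unfolding strict_linear_order_on_def trans_def by blast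
  have irr: "\<And>x. (x,x)\<notin>r"
    using slo unfolding strict_linear_order_on_def irrefl_on_def by blast
  have tot: "\<And>x y. x\<in>V \<Longrightarrow> y\<in>V \<Longrightarrow> x\<noteq>y \<Longrightarrow> (x,y)\<in>r \<or> (y,x)\<in>r"
    using slo unfolding strict_linear_order_on_def total_on_def by blast
  have pv: "\<And>u v w. u\<in>V \<Longrightarrow> v\<in>V \<Longrightarrow> w\<in>V \<Longrightarrow> (u,v)\<in>r \<Longrightarrow> (v,w)\<in>r \<Longrightarrow> {u,w}\<in>E \<Longrightarrow> {u,v}\<in>E \<and> {v,w}\<in>E"
  proof -
    fix u v w assume h: "u\<in>V" "v\<in>V" "w\<in>V" "(u,v)\<in>r" "(v,w)\<in>r" "{u,w}\<in>E"
    have P: "\<forall>u\<in>V. \<forall>v\<in>V. \<forall>w\<in>V. (u, v) \<in> r \<and> (v, w) \<in> r \<and> {u, w} \<in> E \<longrightarrow>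
        {u, v} \<in> E \<and> {v, w} \<in> E" using assms(2) unfolding proper_vertex_ordering_def by (elim conjE)
    show "{u,v}\<in>E \<and> {v,w}\<in>E" using bspec[OF bspec[OF bspec[OF P h(1)] h(2)] h(3)] h(4-6) by blast
  qed
  have ord: "\<exists>u v. f={u,v} \<and> u\<in>V \<and> v\<in>V \<and> (u,v)\<in>r" if "f\<in>E" for f
  proof -
    have "\<exists>u v. f={u,v} \<and> u\<in>V \<and> v\<in>V \<and> u\<noteq>v" using sgV that by (rule bspec)
    then obtain u v where uv: "f={u,v}" "u\<in>V" "v\<in>V" "u\<noteq>v" by (elim exE conjE) (rule that; assumption)
    show ?thesis
    proof (cases "(u,v)\<in>r")
      case True then show ?thesis using uv by (intro exI[of _ u] exI[of _ v]) simp
    next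
      case False then have "(v,u)\<in>r" using tot[OF uv(2,3,4)] by blast
      then show ?thesis using uv by (intro exI[of _ v] exI[of _ u]) (auto simp: insert_commute)
    qed
  qed
  obtain a b where ab: "e={a,b}" "a\<in>V" "b\<in>V" "(a,b)\<in>r" using ord[OF assms(3)] by (elim exE conjE) (rule that; assumption)
  obtain c d where cd: "e'={c,d}" "c\<in>V" "d\<in>V" "(c,d)\<in>r" using ord[OF assms(4)] by (elim exE conjE) (rule that; assumption)
  have l0: "lend r {a,b} = a" "rend r {a,b} = b" by (rule lr[of r a b], rule irr, erule (1) tr, rule ab(4))+
  have l0': "lend r {c,d} = c" "rend r {c,d} = d" by (rule lr[of r c d], rule irr, erule (1) tr, rule cd(4))+
  have l: "lend r e = a" "rend r e = b" using l0 ab(1) by simp_all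
  have l': "lend r e' = c" "rend r e' = d" using l0' cd(1) by simp_all
  show ?thesis unfolding ab(1) cd(1) l0 l0'
  proof (rule core[of E r V a b c d])
    show "{a,b}\<in>E" using assms(3) ab(1) by simp
    show "{c,d}\<in>E" using assms(4) cd(1) by simp
    show "{a,b}\<noteq>{c,d}" using assms(5) ab(1) cd(1) by simp
  qed (fact sg tr irr tot pv ab(2-4) cd(2-4))+
qed

end
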